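(* Let $\Delta$ be a compact convex polygon in a $2$-dimensional real affine space with direction space $V$, and associate to each edge its normal line, a point of $\mathbb P(V^* )\cong\mathbb{RP}^1$. Then $\Delta$ is of rational type if and only if either $\Delta$ has at most $3$ distinct normal lines, or it has at least $4$ distinct normal lines and the cross-ratio of any four distinct ones is rational. In particular a quadrilateral is of rational type iff it has at most three distinct normal lines or the cross-ratio of its four normal lines is rational.
   Context: $\Delta$ is of rational type if there exists a lattice $\Lambda\subset V^*$ such that every edge has a normal vector lying in $\Lambda$. The cross-ratio of four distinct points $P_i=[x_i:y_i]\in\mathbb{RP}^1$ is $\mathbf r(P_1,P_2;P_3,P_4)=\frac{(x_1y_3-y_1x_3)(x_2y_4-y_2x_4)}{(x_1y_4-y_1x_4)(x_2y_3-y_2x_3)}$; whether it is rational does not depend on the ordering. *)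

theory Defs
  imports "HOL-Analysis.Analysis"
begin

text \<open>The 2-dimensional real affine space is modelled as real \<times> real; its
direction space V is again real \<times> real, and V* is identified with
real \<times> real via the standard inner product (u acts as x \<mapsto> u \<bullet> x).\<close>

definition compact_convex_polygon :: "(real \<times> real) set \<Rightarrow> bool" where
  "compact_convex_polygon P \<longleftrightarrow>
     (\<exists>S. finite S \<and> P = convex hull S) \<and> interior P \<noteq> {}"

definition is_edge :: "(real \<times> real) set \<Rightarrow> (real \<times> real) set \<Rightarrow> bool" where
  "is_edge P F \<longleftrightarrow> F face_of P \<and> aff_dim F = 1"

text \<open>Normal line of an edge F: the set of linear functionals (covectors) constant on F;
for an edge this is a 1-dimensional subspace of V*, i.e. a point of P(V*).\<close>
definition normal_line :: "(real \<times> real) set \<Rightarrow> (real \<times> real) set" where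
  "normal_line F = {u. \<forall>x\<in>F. \<forall>y\<in>F. u \<bullet> x = u \<bullet> y}"

definition normal_lines :: "(real \<times> real) set \<Rightarrow> (real \<times> real) set set" where
  "normal_lines P = {normal_line F | F. is_edge P F}"

definition lattice :: "real \<times> real \<Rightarrow> real \<times> real \<Rightarrow> (real \<times> real) set" where
  "lattice a b = {of_int m *\<^sub>R a + of_int n *\<^sub>R b | m n. True}"

definition rational_type :: "(real \<times> real) set \<Rightarrow> bool" where
  "rational_type P \<longleftrightarrow>
     (\<exists>a b. independent {a, b} \<and> a \<noteq> b \<and>
        (\<forall>F. is_edge P F \<longrightarrow> (\<exists>u \<in> lattice a b. u \<noteq> 0 \<and> u \<in> normal_line F)))"

definition det2 :: "real \<times> real \<Rightarrow> real \<times> real \<Rightarrow> real" where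
  "det2 p q = fst p * snd q - snd p * fst q"

text \<open>Cross-ratio of the points [P1],...,[P4] of RP^1 given by representatives.\<close>
definition cross_ratio ::
  "real \<times> real \<Rightarrow> real \<times> real \<Rightarrow> real \<times> real \<Rightarrow> real \<times> real \<Rightarrow> real" where
  "cross_ratio p1 p2 p3 p4 =
     (det2 p1 p3 * det2 p2 p4) / (det2 p1 p4 * det2 p2 p3)"

end

theory Submission imports Defs begin

definition isline :: "(real \<times> real) set \<Rightarrow> bool" where
  "isline L \<longleftrightarrow> (\<exists>d::real\<times>real. d \<noteq> 0 \<and> L = {u. u \<bullet> d = 0})"

lemma perp_det:
  fixes u v d :: "real \<times> real"
  assumes "d \<noteq> 0" "u \<bullet> d = 0" "v \<bullet> d = 0"
  shows "det2 u v = 0"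
proof -
  obtain u1 u2 where u: "u = (u1,u2)" by (cases u)
  obtain v1 v2 where v: "v = (v1,v2)" by (cases v)
  obtain d1 d2 where d: "d = (d1,d2)" by (cases d)
  have e1: "u1* d1 + u2* d2 = 0" and e2: "v1* d1+v2* d2 = 0" using assms u v d by auto
  have "d1 * (u1* v2 - u2* v1) = 0"
  proof -
    have "d1 * (u1* v2 - u2* v1) = v2*(u1* d1 + u2* d2) - u2*(v1* d1+v2* d2)" by (simp add: algebra_simps)
    thus ?thesis using e1 e2 by simp
  qed
  moreover have "d2 * (u1* v2 - u2* v1) = 0"
  proof -
    have "d2 * (u1* v2 - u2* v1) = u1*(v1* d1+v2* d2) - v1*(u1* d1 + u2* d2)" by (simp add: algebra_simps)
    thus ?thesis using e1 e2 by simp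
  qed
  moreover have "d1 \<noteq> 0 \<or> d2 \<noteq> 0" using assms(1) d by (auto simp: zero_prod_def)
  ultimately show ?thesis using u v by (auto simp: det2_def)
qed

lemma det_scale:
  fixes u w :: "real \<times> real"
  assumes "w \<noteq> 0" "det2 u w = 0"
  shows "\<exists>s. u = s *\<^sub>R w"
proof -
  obtain u1 u2 where u: "u = (u1,u2)" by (cases u)
  obtain w1 w2 where w: "w = (w1,w2)" by (cases w)
  have e: "u1* w2 = u2* w1" using assms(2) u w by (simp add: det2_def)
  show ?thesis
  proof (cases "w1 = 0")
    case True
    then have "w2 \<noteq> 0" using assms(1) w by (auto simp: zero_prod_def)
    then have "u = (u2/w2) *\<^sub>R w" using e True u w by (auto simp: field_simps)
    thus ?thesis by blast
  next
    case False
    then have "u = (u1/w1) *\<^sub>R w" using e u w by (auto simp: field_simps)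
    thus ?thesis by blast
  qed
qed

lemma det2_scaleL: "det2 (c *\<^sub>R u) v = c * det2 u v" by (simp add: det2_def algebra_simps)
lemma det2_scaleR: "det2 u (c *\<^sub>R v) = c * det2 u v" by (simp add: det2_def algebra_simps)
lemma det2_addL: "det2 (u + w) v = det2 u v + det2 w v" by (simp add: det2_def algebra_simps)
lemma det2_addR: "det2 u (v + w) = det2 u v + det2 u w" by (simp add: det2_def algebra_simps)
lemma det2_self: "det2 u u = 0" by (simp add: det2_def)
lemma det2_swap: "det2 u v = - det2 v u" by (simp add: det2_def)

lemma isline_nonzero: assumes "isline L" shows "\<exists>u\<in>L. u \<noteq> 0"
proof -
  obtain d where d: "d \<noteq> 0" "L = {u. u \<bullet> d = 0}" using assms isline_def by auto
  obtain d1 d2 where dd: "d = (d1,d2)" by (cases d)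
  have "(-d2, d1) \<in> L" "(-d2,d1) \<noteq> (0::real\<times>real)" using d dd by (auto simp: inner_Pair zero_prod_def)
  thus ?thesis by blast
qed

lemma isline_scale: assumes "isline L" "u \<in> L" shows "c *\<^sub>R u \<in> L"
  using assms by (auto simp: isline_def)

lemma isline_det: assumes "isline L" "u \<in> L" "v \<in> L" shows "det2 u v = 0"
proof -
  obtain d where "d \<noteq> 0" "L = {u. u \<bullet> d = 0}" using assms(1) isline_def by auto
  thus ?thesis using assms(2,3) perp_det by blast
qed

lemma isline_mem: assumes "isline L" "w \<in> L" "w \<noteq> 0" "det2 v w = 0" shows "v \<in> L"
  using det_scale[OF assms(3,4)] isline_scale[OF assms(1,2)] by auto

lemma isline_eq: assumes "isline L" "isline L'" "u \<in> L" "u' \<in> L'" "u \<noteq> 0" "u' \<noteq> 0"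
  "det2 u u' = 0" shows "L = L'"
proof
  show "L \<subseteq> L'"
  proof
    fix v assume "v \<in> L"
    then have "det2 v u = 0" using isline_det assms by blast
    then obtain t where "v = t *\<^sub>R u" using det_scale assms by blast
    then have "det2 v u' = 0" using assms(7) by (simp add: det2_scaleL)
    thus "v \<in> L'" using isline_mem assms by blast
  qed
  show "L' \<subseteq> L"
  proof
    fix v assume "v \<in> L'"
    then have "det2 v u' = 0" using isline_det assms by blast
    then obtain t where "v = t *\<^sub>R u'" using det_scale assms by blast
    then have "det2 v u = 0" using assms(7) det2_swap[of u u'] by (simp add: det2_scaleL)
    thus "v \<in> L" using isline_mem assms by blast
  qed
qed

lemma det_indep: fixes a b :: "real \<times> real" assumes "det2 a b \<noteq> 0"
  shows "independent {a, b} \<and> a \<noteq> b"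
proof -
  have b0: "b \<noteq> 0" using assms by (auto simp: det2_def)
  have "a \<notin> span {b}"
  proof
    assume "a \<in> span {b}"
    then obtain k where "a = k *\<^sub>R b" by (auto simp: span_singleton)
    thus False using assms by (simp add: det2_scaleL det2_self)
  qed
  moreover have "independent {b}" using b0 by (simp add: independent_insert)
  moreover have "a \<noteq> b" using assms by (auto simp: det2_self)
  ultimately show ?thesis by (simp add: independent_insert)
qed

lemma edge_line: assumes "is_edge P F" shows "isline (normal_line F)"
proof -
  have ad: "aff_dim F = 1" using assms is_edge_def by auto
  then have "collinear F" by (simp add: collinear_aff_dim)
  then obtain d where d: "\<forall>x\<in>F. \<forall>y\<in>F. \<exists>c. x - y = c *\<^sub>R d" by (auto simp: collinear_def)
  have "F \<noteq> {}"
  proof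
    assume "F = {}" then have "aff_dim F = -1" by simp
    with ad show False by simp
  qed
  then obtain p where p: "p \<in> F" by blast
  have "\<exists>q\<in>F. q \<noteq> p"
  proof (rule ccontr)
    assume "\<not> ?thesis"
    then have "F = {p}" using p by blast
    thus False using ad by simp
  qed
  then obtain q where q: "q \<in> F" "q \<noteq> p" by blast
  obtain c where c: "q - p = c *\<^sub>R d" using d p q by blast
  have c0: "c \<noteq> 0" and d0: "d \<noteq> 0"
    using c q(2) by (metis eq_iff_diff_eq_0 scale_eq_0_iff)+
  have "normal_line F = {u. u \<bullet> d = 0}"
  proof (intro set_eqI iffI)
    fix u assume "u \<in> normal_line F"
    then have "u \<bullet> q = u \<bullet> p" using p q unfolding normal_line_def by blast
    then have "u \<bullet> (q - p) = 0" by (simp add: inner_diff_right)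
    thus "u \<in> {u. u \<bullet> d = 0}" using c c0 by simp
  next
    fix u assume "u \<in> {u. u \<bullet> d = 0}"
    then have u: "u \<bullet> d = 0" by simp
    show "u \<in> normal_line F" unfolding normal_line_def
    proof (intro CollectI ballI)
      fix x y assume "x \<in> F" "y \<in> F"
      then obtain e where "x - y = e *\<^sub>R d" using d by blast
      then have "u \<bullet> (x - y) = 0" using u by simp
      thus "u \<bullet> x = u \<bullet> y" by (simp add: inner_diff_right)
    qed
  qed
  thus ?thesis using d0 isline_def by blast
qed


lemma lat_lin: "of_int m *\<^sub>R a + of_int n *\<^sub>R b \<in> lattice a b"
  unfolding lattice_def by blast

lemma lat_a: "a \<in> lattice a b" using lat_lin[of 1 a 0 b] by simp
lemma lat_b: "b \<in> lattice a b" using lat_lin[of 0 a 1 b] by simp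
lemma lat_ab: "a + b \<in> lattice a b" using lat_lin[of 1 a 1 b] by simp

lemma det_lat: "det2 (of_int m *\<^sub>R a + of_int n *\<^sub>R b) (of_int m' *\<^sub>R a + of_int n' *\<^sub>R b)
   = of_int (m * n' - n * m') * det2 a b"
  unfolding det2_def by (simp add: algebra_simps)

lemma cr_lattice:
  assumes "w1 \<in> lattice a b" "w2 \<in> lattice a b" "w3 \<in> lattice a b" "w4 \<in> lattice a b"
  shows "cross_ratio w1 w2 w3 w4 \<in> \<rat>"
proof -
  obtain m1 n1 where 1: "w1 = of_int m1 *\<^sub>R a + of_int n1 *\<^sub>R b" using assms(1) lattice_def by auto
  obtain m2 n2 where 2: "w2 = of_int m2 *\<^sub>R a + of_int n2 *\<^sub>R b" using assms(2) lattice_def by auto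
  obtain m3 n3 where 3: "w3 = of_int m3 *\<^sub>R a + of_int n3 *\<^sub>R b" using assms(3) lattice_def by auto
  obtain m4 n4 where 4: "w4 = of_int m4 *\<^sub>R a + of_int n4 *\<^sub>R b" using assms(4) lattice_def by auto
  define D where "D = det2 a b"
  define A where "A = (m1 * n3 - n1 * m3) * (m2 * n4 - n2 * m4)"
  define B where "B = (m1 * n4 - n1 * m4) * (m2 * n3 - n2 * m3)"
  have cr: "cross_ratio w1 w2 w3 w4 = (D*D * of_int A) / (D*D * of_int B)"
    unfolding cross_ratio_def 1 2 3 4 det_lat A_def B_def D_def by (simp add: algebra_simps)
  show ?thesis
  proof (cases "D = 0")
    case True then show ?thesis using cr by simp
  next
    case False
    then have "cross_ratio w1 w2 w3 w4 = of_int A / of_int B" using cr by simp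
    thus ?thesis by simp
  qed
qed

lemma cr_scale:
  assumes "s1 \<noteq> 0" "s2 \<noteq> 0" "s3 \<noteq> 0" "s4 \<noteq> 0"
  shows "cross_ratio (s1 *\<^sub>R w1) (s2 *\<^sub>R w2) (s3 *\<^sub>R w3) (s4 *\<^sub>R w4) = cross_ratio w1 w2 w3 w4"
proof -
  have k: "s1 * s2 * s3 * s4 \<noteq> 0" using assms by simp
  have "cross_ratio (s1 *\<^sub>R w1) (s2 *\<^sub>R w2) (s3 *\<^sub>R w3) (s4 *\<^sub>R w4)
     = ((s1 * s2 * s3 * s4) * (det2 w1 w3 * det2 w2 w4)) / ((s1 * s2 * s3 * s4) * (det2 w1 w4 * det2 w2 w3))"
    unfolding cross_ratio_def det2_scaleL det2_scaleR by (simp add: algebra_simps)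
  also have "\<dots> = cross_ratio w1 w2 w3 w4"
    using k unfolding cross_ratio_def by (rule mult_divide_mult_cancel_left)
  finally show ?thesis .
qed

lemma cramer:
  assumes "det2 n1 n2 \<noteq> 0"
  shows "v = (det2 v n2 / det2 n1 n2) *\<^sub>R n1 + (det2 n1 v / det2 n1 n2) *\<^sub>R n2"
proof -
  obtain a1 a2 where a: "n1 = (a1,a2)" by (cases n1)
  obtain b1 b2 where b: "n2 = (b1,b2)" by (cases n2)
  obtain v1 v2 where c: "v = (v1,v2)" by (cases v)
  have D: "a1 * b2 - a2 * b1 \<noteq> 0" using assms a b by (simp add: det2_def)
  have e: "det2 n1 n2 *\<^sub>R v = det2 v n2 *\<^sub>R n1 + det2 n1 v *\<^sub>R n2"
    unfolding a b c det2_def by (simp add: prod_eq_iff algebra_simps)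
  have "v = (1 / det2 n1 n2) *\<^sub>R (det2 n1 n2 *\<^sub>R v)" using assms by simp
  also have "\<dots> = (det2 v n2 / det2 n1 n2) *\<^sub>R n1 + (det2 n1 v / det2 n1 n2) *\<^sub>R n2"
    unfolding e by (simp add: scaleR_add_right)
  finally show ?thesis .
qed

lemma key:
  assumes D: "det2 a b \<noteq> 0" and L: "isline L" "u \<in> L" "u \<noteq> 0"
    and cr: "cross_ratio a b (a + b) u \<in> \<rat>"
  shows "\<exists>w\<in>lattice a b. w \<noteq> 0 \<and> w \<in> L"
proof (cases "det2 a u = 0")
  case True
  then have "a \<in> L" using isline_mem L by blast
  moreover have "a \<noteq> 0" using D by (auto simp: det2_def)
  ultimately show ?thesis using lat_a by blast
next
  case False
  define X where "X = det2 a u"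
  define Y where "Y = det2 b u"
  have "cross_ratio a b (a + b) u = - Y / X"
    using D False unfolding cross_ratio_def X_def Y_def
    by (simp add: det2_addR det2_self det2_swap[of b a] field_simps)
  with cr have "- Y / X \<in> \<rat>" by simp
  then obtain r s where rs: "s > 0" "coprime r s" "- Y / X = of_int r / of_int s" using Rats_cases'[OF \<open>- Y / X \<in> \<rat>\<close>] by metis
  define w where "w = of_int r *\<^sub>R a + of_int s *\<^sub>R b"
  have "of_int r * X = - of_int s * Y"
    using rs False X_def by (simp add: field_simps)
  then have "det2 w u = 0" unfolding w_def X_def Y_def
    by (simp add: det2_addL det2_scaleL)
  then have "w \<in> L" using isline_mem L by blast
  moreover have "det2 a w = of_int s * det2 a b" unfolding w_def
    by (simp add: det2_addR det2_scaleR det2_self)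
  then have "w \<noteq> 0" using D rs(1) by (auto simp: det2_def)
  ultimately show ?thesis using lat_lin w_def by blast
qed


lemma isline_distinct_det:
  assumes "isline L" "isline L'" "L \<noteq> L'" "u \<in> L" "u' \<in> L'" "u \<noteq> 0" "u' \<noteq> 0"
  shows "det2 u u' \<noteq> 0"
  using isline_eq assms by blast

lemma forward:
  assumes lines: "\<forall>L\<in>N. isline L"
    and lat: "\<forall>L\<in>N. \<exists>u\<in>lattice a b. u \<noteq> 0 \<and> u \<in> L"
  shows "\<forall>L1 L2 L3 L4 u1 u2 u3 u4.
                L1 \<in> N \<and> L2 \<in> N \<and>
                L3 \<in> N \<and> L4 \<in> N \<and>
                distinct [L1, L2, L3, L4] \<and>
                u1 \<in> L1 \<and> u2 \<in> L2 \<and> u3 \<in> L3 \<and> u4 \<in> L4 \<and>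
                u1 \<noteq> 0 \<and> u2 \<noteq> 0 \<and> u3 \<noteq> 0 \<and> u4 \<noteq> 0 \<longrightarrow>
                cross_ratio u1 u2 u3 u4 \<in> \<rat>"
proof (intro allI impI)
  fix L1 L2 L3 L4 u1 u2 u3 u4
  assume h: "L1 \<in> N \<and> L2 \<in> N \<and> L3 \<in> N \<and> L4 \<in> N \<and> distinct [L1, L2, L3, L4] \<and>
                u1 \<in> L1 \<and> u2 \<in> L2 \<and> u3 \<in> L3 \<and> u4 \<in> L4 \<and>
                u1 \<noteq> 0 \<and> u2 \<noteq> 0 \<and> u3 \<noteq> 0 \<and> u4 \<noteq> 0"
  have sc: "\<exists>w s. w \<in> lattice a b \<and> s \<noteq> 0 \<and> u = s *\<^sub>R w" if LN: "L \<in> N" and uL: "u \<in> L" and u0: "u \<noteq> 0" for L u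
  proof -
    obtain w where w: "w \<in> lattice a b" "w \<noteq> 0" "w \<in> L" using bspec[OF lat LN] by blast
    have il: "isline L" using bspec[OF lines LN] .
    have "det2 u w = 0" by (rule isline_det[OF il uL w(3)])
    then obtain s where s: "u = s *\<^sub>R w" using det_scale[OF w(2)] by blast
    have "s \<noteq> 0" using u0 unfolding s by simp
    with s w show ?thesis by blast
  qed
  obtain w1 s1 where 1: "w1 \<in> lattice a b" "s1 \<noteq> 0" "u1 = s1 *\<^sub>R w1" using sc[of L1 u1] h by blast
  obtain w2 s2 where 2: "w2 \<in> lattice a b" "s2 \<noteq> 0" "u2 = s2 *\<^sub>R w2" using sc[of L2 u2] h by blast
  obtain w3 s3 where 3: "w3 \<in> lattice a b" "s3 \<noteq> 0" "u3 = s3 *\<^sub>R w3" using sc[of L3 u3] h by blast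
  obtain w4 s4 where 4: "w4 \<in> lattice a b" "s4 \<noteq> 0" "u4 = s4 *\<^sub>R w4" using sc[of L4 u4] h by blast
  have "cross_ratio u1 u2 u3 u4 = cross_ratio w1 w2 w3 w4"
    unfolding 1(3) 2(3) 3(3) 4(3) by (rule cr_scale[OF 1(2) 2(2) 3(2) 4(2)])
  thus "cross_ratio u1 u2 u3 u4 \<in> \<rat>" using cr_lattice[OF 1(1) 2(1) 3(1) 4(1)] by simp
qed

lemma abstract:
  assumes fin: "finite N" and lines: "\<forall>L\<in>N. isline L"
  shows "(\<exists>a b. independent {a, b} \<and> a \<noteq> b \<and> (\<forall>L\<in>N. \<exists>u\<in>lattice a b. u \<noteq> 0 \<and> u \<in> L)) \<longleftrightarrow>
           (card N \<le> 3 \<or>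
            (card N \<ge> 4 \<and>
             (\<forall>L1 L2 L3 L4 u1 u2 u3 u4.
                L1 \<in> N \<and> L2 \<in> N \<and>
                L3 \<in> N \<and> L4 \<in> N \<and>
                distinct [L1, L2, L3, L4] \<and>
                u1 \<in> L1 \<and> u2 \<in> L2 \<and> u3 \<in> L3 \<and> u4 \<in> L4 \<and>
                u1 \<noteq> 0 \<and> u2 \<noteq> 0 \<and> u3 \<noteq> 0 \<and> u4 \<noteq> 0 \<longrightarrow>
                cross_ratio u1 u2 u3 u4 \<in> \<rat>)))" (is "?L \<longleftrightarrow> ?R")
proof
  assume ?L
  then obtain a b where "\<forall>L\<in>N. \<exists>u\<in>lattice a b. u \<noteq> 0 \<and> u \<in> L" by blast
  note F = forward[OF lines this]
  have "card N \<le> 3 \<or> card N \<ge> 4" by linarith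
  thus ?R using F by blast
next
  assume R: ?R
  have suff: "?L" if "det2 a b \<noteq> 0" "\<forall>L\<in>N. \<exists>u\<in>lattice a b. u \<noteq> 0 \<and> u \<in> L" for a b
    using det_indep[OF that(1)] that(2) by blast
  have nz: "\<exists>u\<in>L. u \<noteq> 0" if "L \<in> N" for L using isline_nonzero lines that by blast
  consider "card N = 0" | "card N = 1" | "card N = 2" | "card N \<ge> 3" by linarith
  then show ?L
  proof cases
    case 1
    then have "N = {}" using fin by simp
    moreover have "det2 (1,0) (0,1) \<noteq> 0" by (simp add: det2_def)
    ultimately show ?thesis using suff by blast
  next
    case 2
    then obtain L1 where N: "N = {L1}" using card_1_singletonE by blast
    obtain n1 where n1: "n1 \<in> L1" "n1 \<noteq> 0" using nz N by blast
    define m where "m = (- snd n1, fst n1)"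
    have "det2 n1 m \<noteq> 0"
    proof
      assume "det2 n1 m = 0"
      then have "fst n1 * fst n1 + snd n1 * snd n1 = 0" by (simp add: det2_def m_def)
      then have "fst n1 = 0 \<and> snd n1 = 0" by (metis sum_squares_eq_zero_iff)
      thus False using n1(2) by (simp add: prod_eq_iff)
    qed
    moreover have "\<forall>L\<in>N. \<exists>u\<in>lattice n1 m. u \<noteq> 0 \<and> u \<in> L" using N n1 lat_a by blast
    ultimately show ?thesis using suff by blast
  next
    case 3
    then obtain L1 L2 where N: "N = {L1, L2}" "L1 \<noteq> L2" by (meson card_2_iff)
    obtain n1 where n1: "n1 \<in> L1" "n1 \<noteq> 0" using nz N by blast
    obtain n2 where n2: "n2 \<in> L2" "n2 \<noteq> 0" using nz N by blast
    have "det2 n1 n2 \<noteq> 0" using isline_distinct_det[of L1 L2 n1 n2] lines N n1 n2 by blast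
    moreover have "\<forall>L\<in>N. \<exists>u\<in>lattice n1 n2. u \<noteq> 0 \<and> u \<in> L" using N n1 n2 lat_a lat_b by blast
    ultimately show ?thesis using suff by blast
  next
    case 4
    have "N \<noteq> {}" using 4 by (intro notI) simp
    then obtain L1 where L1: "L1 \<in> N" by blast
    have "card (N - {L1}) \<ge> 2" using 4 L1 fin by simp
    then have "N - {L1} \<noteq> {}" by (intro notI) simp
    then obtain L2 where L2: "L2 \<in> N - {L1}" by blast
    have "card (N - {L1} - {L2}) \<ge> 1" using 4 L1 L2 fin by (simp add: card_Diff_singleton)
    then have "N - {L1} - {L2} \<noteq> {}" by (intro notI) simp
    then obtain L3 where L3: "L3 \<in> N - {L1} - {L2}" by blast
    obtain n1 where n1: "n1 \<in> L1" "n1 \<noteq> 0" using nz L1 by blast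
    obtain n2 where n2: "n2 \<in> L2" "n2 \<noteq> 0" using nz L2 by blast
    obtain n3 where n3: "n3 \<in> L3" "n3 \<noteq> 0" using nz L3 by blast
    have il1: "isline L1" and il2: "isline L2" and il3: "isline L3" using lines L1 L2 L3 by auto
    have D: "det2 n1 n2 \<noteq> 0" using isline_distinct_det[OF il1 il2 _ n1(1) n2(1) n1(2) n2(2)] L2 by blast
    have D32: "det2 n3 n2 \<noteq> 0" using isline_distinct_det[OF il3 il2 _ n3(1) n2(1) n3(2) n2(2)] L3 by blast
    have D13: "det2 n1 n3 \<noteq> 0" using isline_distinct_det[OF il1 il3 _ n1(1) n3(1) n1(2) n3(2)] L3 by blast
    define \<alpha> where "\<alpha> = det2 n3 n2 / det2 n1 n2"
    define \<beta> where "\<beta> = det2 n1 n3 / det2 n1 n2"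
    have al: "\<alpha> \<noteq> 0" "\<beta> \<noteq> 0" using D D32 D13 \<alpha>_def \<beta>_def by auto
    define a where "a = \<alpha> *\<^sub>R n1"
    define b where "b = \<beta> *\<^sub>R n2"
    have ab: "a + b = n3" using cramer[OF D, of n3] a_def b_def \<alpha>_def \<beta>_def by simp
    have Dab: "det2 a b \<noteq> 0" using D al unfolding a_def b_def by (simp add: det2_scaleL det2_scaleR)
    have a0: "a \<noteq> 0" "b \<noteq> 0" using Dab by (auto simp: det2_def)
    have aL: "a \<in> L1" using isline_scale[OF il1 n1(1)] a_def by simp
    have bL: "b \<in> L2" using isline_scale[OF il2 n2(1)] b_def by simp
    have "\<forall>L\<in>N. \<exists>u\<in>lattice a b. u \<noteq> 0 \<and> u \<in> L"
    proof
      fix L assume L: "L \<in> N"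
      show "\<exists>u\<in>lattice a b. u \<noteq> 0 \<and> u \<in> L"
      proof (cases "L \<in> {L1, L2, L3}")
        case True
        then consider "L = L1" | "L = L2" | "L = L3" by blast
        then show ?thesis
        proof cases
          case 1 then show ?thesis using aL a0 lat_a by blast
        next
          case 2 then show ?thesis using bL a0 lat_b by blast
        next
          case 3 then show ?thesis using ab n3 lat_ab by metis
        qed
      next
        case False
        have ne: "L1 \<noteq> L2" "L1 \<noteq> L3" "L2 \<noteq> L3" "L \<noteq> L1" "L \<noteq> L2" "L \<noteq> L3"
          using L2 L3 False by blast+
        have "{L1, L2, L3, L} \<subseteq> N" using L L1 L2 L3 by blast
        then have "card {L1, L2, L3, L} \<le> card N" using fin by (rule card_mono[rotated])
        moreover have "card {L1, L2, L3, L} = 4" using ne by simp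
        ultimately have c4: "\<not> card N \<le> 3" by linarith
        obtain u where u: "u \<in> L" "u \<noteq> 0" using nz L by blast
        have CR: "\<forall>L1 L2 L3 L4 u1 u2 u3 u4.
                L1 \<in> N \<and> L2 \<in> N \<and>
                L3 \<in> N \<and> L4 \<in> N \<and>
                distinct [L1, L2, L3, L4] \<and>
                u1 \<in> L1 \<and> u2 \<in> L2 \<and> u3 \<in> L3 \<and> u4 \<in> L4 \<and>
                u1 \<noteq> 0 \<and> u2 \<noteq> 0 \<and> u3 \<noteq> 0 \<and> u4 \<noteq> 0 \<longrightarrow>
                cross_ratio u1 u2 u3 u4 \<in> \<rat>" using R c4 by blast
        have dist: "distinct [L1, L2, L3, L]" using ne by simp
        have "cross_ratio a b (a + b) u \<in> \<rat>"
          using CR[rule_format, of L1 L2 L3 L a b "a + b" u] L1 L2 L3 L dist aL bL ab n3 a0 u by blast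
        thus ?thesis using key[OF Dab _ u] lines L by blast
      qed
    qed
    thus ?thesis using suff Dab by blast
  qed
qed


lemma normal_lines_img: "normal_lines P = normal_line ` {F. is_edge P F}"
  unfolding normal_lines_def by (simp add: image_def) (metis mem_Collect_eq)

lemma rational_type_alt: "rational_type P \<longleftrightarrow>
  (\<exists>a b. independent {a, b} \<and> a \<noteq> b \<and> (\<forall>L\<in>normal_lines P. \<exists>u\<in>lattice a b. u \<noteq> 0 \<and> u \<in> L))"
  unfolding rational_type_def normal_lines_img by simp

theorem mainTheorem13:
  fixes P :: "(real \<times> real) set"
  assumes "compact_convex_polygon P"
  shows "rational_type P \<longleftrightarrow>
           (card (normal_lines P) \<le> 3 \<or>
            (card (normal_lines P) \<ge> 4 \<and>
             (\<forall>L1 L2 L3 L4 u1 u2 u3 u4.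
                L1 \<in> normal_lines P \<and> L2 \<in> normal_lines P \<and>
                L3 \<in> normal_lines P \<and> L4 \<in> normal_lines P \<and>
                distinct [L1, L2, L3, L4] \<and>
                u1 \<in> L1 \<and> u2 \<in> L2 \<and> u3 \<in> L3 \<and> u4 \<in> L4 \<and>
                u1 \<noteq> 0 \<and> u2 \<noteq> 0 \<and> u3 \<noteq> 0 \<and> u4 \<noteq> 0 \<longrightarrow>
                cross_ratio u1 u2 u3 u4 \<in> \<rat>)))"
proof -
  have "polytope P" using assms unfolding compact_convex_polygon_def polytope_def by blast
  then have "finite {F. F face_of P}" by (rule finite_polytope_faces)
  moreover have "{F. is_edge P F} \<subseteq> {F. F face_of P}" unfolding is_edge_def by blast
  ultimately have "finite {F. is_edge P F}" by (rule finite_subset[rotated])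
  then have fin: "finite (normal_lines P)" unfolding normal_lines_img by simp
  have lines: "\<forall>L\<in>normal_lines P. isline L" unfolding normal_lines_img using edge_line by blast
  show ?thesis unfolding rational_type_alt by (rule abstract[OF fin lines])
qed

end
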